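(* Let $(E;\oplus,0)$ be a generalized effect algebra. If $E$ is monotone Dedekind upwards $\sigma$-complete, then $E$ is monotone Dedekind downwards $\sigma$-complete. If $E$ is upwards directed, then $E$ is monotone Dedekind upwards $\sigma$-complete if and only if $E$ is monotone Dedekind downwards $\sigma$-complete.
   Context: A generalized effect algebra is a structure $(E;\oplus,0)$ with $0\in E$ and a partial binary operation $\oplus$ such that for all $x,y,z\in E$: $x\oplus y=y\oplus x$ if one side is defined; $(x\oplus y)\oplus z=x\oplus(y\oplus z)$ if one side is defined; $x\oplus0=x$; $x\oplus y=x\oplus z$ implies $y=z$; $x\oplus y=0$ implies $x=y=0$. The induced partial order is $x\le y$ iff $x\oplus z=y$ for some $z\in E$. $E$ is monotone Dedekind upwards $\sigma$-complete if every sequence $x_1\le x_2\le\cdots$ that has an upper bound in $E$ has a supremum $\bigvee_n x_n$ in $E$; monotone Dedekind downwards $\sigma$-complete if every sequence $x_1\ge x_2\ge\cdots$ has an infimum $\bigwedge_n x_n$ in $E$; upwards directed if any two elements of $E$ have a common upper bound in $E$. *)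

theory Defs
  imports Main
begin

text \<open>A generalized effect algebra on the whole type 'a: the partial operation is
  modelled as a total function into 'a option (None = undefined), with zero element z.\<close>

definition gen_effect_algebra :: "('a \<Rightarrow> 'a \<Rightarrow> 'a option) \<Rightarrow> 'a \<Rightarrow> bool" where
  "gen_effect_algebra oplus z \<longleftrightarrow>
     (\<forall>x y. oplus x y = oplus y x) \<and>
     (\<forall>x y w. Option.bind (oplus x y) (\<lambda>u. oplus u w) = Option.bind (oplus y w) (\<lambda>v. oplus x v)) \<and>
     (\<forall>x. oplus x z = Some x) \<and>
     (\<forall>x y w. oplus x y \<noteq> None \<and> oplus x y = oplus x w \<longrightarrow> y = w) \<and>
     (\<forall>x y. oplus x y = Some z \<longrightarrow> x = z \<and> y = z)"

definition gea_le :: "('a \<Rightarrow> 'a \<Rightarrow> 'a option) \<Rightarrow> 'a \<Rightarrow> 'a \<Rightarrow> bool" where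
  "gea_le oplus x y \<longleftrightarrow> (\<exists>w. oplus x w = Some y)"

definition mono_dedekind_up_sigma_complete :: "('a \<Rightarrow> 'a \<Rightarrow> 'a option) \<Rightarrow> bool" where
  "mono_dedekind_up_sigma_complete oplus \<longleftrightarrow>
     (\<forall>f :: nat \<Rightarrow> 'a. (\<forall>n. gea_le oplus (f n) (f (Suc n))) \<and> (\<exists>u. \<forall>n. gea_le oplus (f n) u) \<longrightarrow>
        (\<exists>s. (\<forall>n. gea_le oplus (f n) s) \<and> (\<forall>u. (\<forall>n. gea_le oplus (f n) u) \<longrightarrow> gea_le oplus s u)))"

definition mono_dedekind_down_sigma_complete :: "('a \<Rightarrow> 'a \<Rightarrow> 'a option) \<Rightarrow> bool" where
  "mono_dedekind_down_sigma_complete oplus \<longleftrightarrow>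
     (\<forall>f :: nat \<Rightarrow> 'a. (\<forall>n. gea_le oplus (f (Suc n)) (f n)) \<longrightarrow>
        (\<exists>i. (\<forall>n. gea_le oplus i (f n)) \<and> (\<forall>l. (\<forall>n. gea_le oplus l (f n)) \<longrightarrow> gea_le oplus l i)))"

definition upwards_directed :: "('a \<Rightarrow> 'a \<Rightarrow> 'a option) \<Rightarrow> bool" where
  "upwards_directed oplus \<longleftrightarrow> (\<forall>x y. \<exists>u. gea_le oplus x u \<and> gea_le oplus y u)"

end

theory Submission
  imports Defs
begin

locale gea_loc =
  fixes oplus :: "'a \<Rightarrow> 'a \<Rightarrow> 'a option" and z :: 'a
  assumes gea: "gen_effect_algebra oplus z"
begin

lemma comm: "oplus x y = oplus y x"
  using gea unfolding gen_effect_algebra_def by blast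

lemma assoc: "Option.bind (oplus x y) (\<lambda>u. oplus u w) = Option.bind (oplus y w) (\<lambda>v. oplus x v)"
  using gea unfolding gen_effect_algebra_def by blast

lemma cancel: "oplus x y = Some c \<Longrightarrow> oplus x w = Some c \<Longrightarrow> y = w"
  using gea unfolding gen_effect_algebra_def by (metis option.distinct(1))

lemma assocL: assumes "oplus x y = Some u" "oplus u w = Some r"
  shows "\<exists>v. oplus y w = Some v \<and> oplus x v = Some r"
proof -
  have "Option.bind (oplus y w) (\<lambda>v. oplus x v) = Some r"
    using assoc[of x y w] assms by simp
  then show ?thesis by (cases "oplus y w") auto
qed

lemma le_trans: "gea_le oplus x y \<Longrightarrow> gea_le oplus y w \<Longrightarrow> gea_le oplus x w"
  unfolding gea_le_def using assocL by blast

lemma le_sum: "oplus a b = Some w \<Longrightarrow> gea_le oplus b w"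
  unfolding gea_le_def by (metis comm)

lemma antitone:
  assumes "oplus x a = Some w" "oplus y b = Some w" "gea_le oplus x y"
  shows "gea_le oplus b a"
proof -
  obtain t where t: "oplus x t = Some y" using assms(3) unfolding gea_le_def by blast
  obtain v where v: "oplus t b = Some v" "oplus x v = Some w" using assocL[OF t assms(2)] by blast
  have "a = v" using cancel[OF assms(1) v(2)] .
  then show ?thesis using v(1) comm unfolding gea_le_def by metis
qed

lemma part1:
  assumes up: "mono_dedekind_up_sigma_complete oplus"
  shows "mono_dedekind_down_sigma_complete oplus"
  unfolding mono_dedekind_down_sigma_complete_def
proof (intro allI impI)
  fix f :: "nat \<Rightarrow> 'a"
  assume dec: "\<forall>n. gea_le oplus (f (Suc n)) (f n)"
  define w where "w = f 0"
  have fw: "gea_le oplus (f n) w" for n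
  proof (induction n)
    case 0 show ?case unfolding w_def gea_le_def using gea unfolding gen_effect_algebra_def by blast
  next
    case (Suc n) then show ?case using dec le_trans by blast
  qed
  define g where "g n = (SOME c. oplus (f n) c = Some w)" for n
  have g: "oplus (f n) (g n) = Some w" for n
    unfolding g_def using fw[of n] unfolding gea_le_def by (rule someI_ex)
  have ginc: "\<forall>n. gea_le oplus (g n) (g (Suc n))"
    using antitone[OF g g] dec by blast
  have gb: "\<forall>n. gea_le oplus (g n) w" using g le_sum comm by metis
  obtain s where s1: "\<forall>n. gea_le oplus (g n) s"
    and s2: "\<forall>u. (\<forall>n. gea_le oplus (g n) u) \<longrightarrow> gea_le oplus s u"
    using up ginc gb unfolding mono_dedekind_up_sigma_complete_def by blast
  obtain i where i: "oplus s i = Some w" using s2 gb unfolding gea_le_def by blast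
  show "\<exists>i. (\<forall>n. gea_le oplus i (f n)) \<and> (\<forall>l. (\<forall>n. gea_le oplus l (f n)) \<longrightarrow> gea_le oplus l i)"
  proof (intro exI conjI allI impI)
    fix n
    show "gea_le oplus i (f n)"
      using antitone[of "g n" "f n" w s i] g[of n] comm i s1 by metis
  next
    fix l assume l: "\<forall>n. gea_le oplus l (f n)"
    have "gea_le oplus l w" using l fw le_trans by blast
    then obtain h where h: "oplus l h = Some w" unfolding gea_le_def by blast
    have "gea_le oplus (g n) h" for n
      using antitone[OF h g[of n]] l by blast
    then have "gea_le oplus s h" using s2 by blast
    then show "gea_le oplus l i" using antitone[OF i, of h l] h comm by metis
  qed
qed

lemma lemA:
  assumes down: "mono_dedekind_down_sigma_complete oplus"
    and inc: "\<forall>n. gea_le oplus (f n) (f (Suc n))"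
    and fw: "\<forall>n. gea_le oplus (f n) w"
  shows "\<exists>s. (\<forall>n. gea_le oplus (f n) s) \<and> gea_le oplus s w \<and>
     (\<forall>v. (\<forall>n. gea_le oplus (f n) v) \<longrightarrow> gea_le oplus v w \<longrightarrow> gea_le oplus s v)"
proof -
  define g where "g n = (SOME c. oplus (f n) c = Some w)" for n
  have g: "oplus (f n) (g n) = Some w" for n
    unfolding g_def using fw unfolding gea_le_def by (meson someI_ex)
  have gdec: "\<forall>n. gea_le oplus (g (Suc n)) (g n)"
    using antitone[OF g g] inc by blast
  have gb: "\<forall>n. gea_le oplus (g n) w" using g le_sum comm by metis
  obtain i where i1: "\<forall>n. gea_le oplus i (g n)"
    and i2: "\<forall>l. (\<forall>n. gea_le oplus l (g n)) \<longrightarrow> gea_le oplus l i"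
    using down gdec unfolding mono_dedekind_down_sigma_complete_def by blast
  have "gea_le oplus i w" using i1 gb le_trans by blast
  then obtain s where s: "oplus i s = Some w" unfolding gea_le_def by blast
  show ?thesis
  proof (intro exI conjI allI impI)
    fix n
    show "gea_le oplus (f n) s"
      using antitone[of i s w "g n" "f n"] s g[of n] comm i1 by metis
  next
    show "gea_le oplus s w" using s le_sum by blast
  next
    fix v assume v1: "\<forall>n. gea_le oplus (f n) v" and v2: "gea_le oplus v w"
    obtain h where h: "oplus v h = Some w" using v2 unfolding gea_le_def by blast
    have "gea_le oplus h (g n)" for n using antitone[OF g h] v1 by blast
    then have "gea_le oplus h i" using i2 by blast
    then show "gea_le oplus s v" using antitone[of h v w i s] h s comm by metis
  qed
qed

lemma part2:
  assumes down: "mono_dedekind_down_sigma_complete oplus"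
    and dir: "upwards_directed oplus"
  shows "mono_dedekind_up_sigma_complete oplus"
  unfolding mono_dedekind_up_sigma_complete_def
proof (intro allI impI)
  fix f :: "nat \<Rightarrow> 'a"
  assume a: "(\<forall>n. gea_le oplus (f n) (f (Suc n))) \<and> (\<exists>u. \<forall>n. gea_le oplus (f n) u)"
  then obtain u where inc: "\<forall>n. gea_le oplus (f n) (f (Suc n))" and fu: "\<forall>n. gea_le oplus (f n) u"
    by blast
  obtain s where s1: "\<forall>n. gea_le oplus (f n) s" and s3:
    "\<forall>v. (\<forall>n. gea_le oplus (f n) v) \<longrightarrow> gea_le oplus v u \<longrightarrow> gea_le oplus s v"
    using lemA[OF down inc fu] by blast
  show "\<exists>s. (\<forall>n. gea_le oplus (f n) s) \<and> (\<forall>u. (\<forall>n. gea_le oplus (f n) u) \<longrightarrow> gea_le oplus s u)"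
  proof (intro exI conjI allI impI)
    fix n show "gea_le oplus (f n) s" using s1 by blast
  next
    fix v assume v: "\<forall>n. gea_le oplus (f n) v"
    obtain w where w: "gea_le oplus u w" "gea_le oplus v w" using dir unfolding upwards_directed_def by blast
    have fw: "\<forall>n. gea_le oplus (f n) w" using fu w(1) le_trans by blast
    obtain s' where s'1: "\<forall>n. gea_le oplus (f n) s'" and s'3:
      "\<forall>v. (\<forall>n. gea_le oplus (f n) v) \<longrightarrow> gea_le oplus v w \<longrightarrow> gea_le oplus s' v"
      using lemA[OF down inc fw] by blast
    have "gea_le oplus s' u" using s'3 fu w(1) by blast
    then have "gea_le oplus s s'" using s3 s'1 by blast
    moreover have "gea_le oplus s' v" using s'3 v w(2) by blast
    ultimately show "gea_le oplus s v" using le_trans by blast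
  qed
qed

end

theorem lemma5p1:
  fixes oplus :: "'a \<Rightarrow> 'a \<Rightarrow> 'a option" and z :: 'a
  assumes "gen_effect_algebra oplus z"
  shows "(mono_dedekind_up_sigma_complete oplus \<longrightarrow> mono_dedekind_down_sigma_complete oplus) \<and>
         (upwards_directed oplus \<longrightarrow>
            (mono_dedekind_up_sigma_complete oplus \<longleftrightarrow> mono_dedekind_down_sigma_complete oplus))"
proof -
  interpret gea_loc oplus z by unfold_locales (rule assms)
  show ?thesis using part1 part2 by blast
qed

end
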